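(* Let $m\ge1$, $k\ge1$, $r>0$ and let $F:\mathbb{R}^{m+1}\to\mathbb{R}^{n+1}$ be a harmonic form of degree $k$ (each component is a harmonic homogeneous polynomial of degree $k$, i.e. $\Delta^0F=0$) with $|F(\bar x)|^2=r^2|\bar x|^{2k}$ for all $\bar x$, so that $F$ restricts to a map $\varphi:\mathbb{S}^m\to\mathbb{S}^n(r)$. Then at every point of $\mathbb{S}^m$, $$\Delta^0\big(|d^0F|^2\big)=-2r^2k(k-1)(m+2k-1)(m+2k-3),$$ $$|\nabla^0 d^0F|^2=r^2k(k-1)\big(m^2-4m+3+4k(m-2)+4k^2\big).$$
   Context: $\mathbb{S}^m$ is the unit sphere in $\mathbb{R}^{m+1}$ and $\mathbb{S}^n(r)$ the sphere of radius $r$ centred at $0$ in $\mathbb{R}^{n+1}$. Operators on $\mathbb{R}^{m+1}$: $\Delta^0 f=-\sum_i\partial^2 f/\partial(x^i)^2$ (applied componentwise to vector functions); $|d^0F|^2=\sum_{i=1}^{m+1}|\partial F/\partial x^i|^2$; $|\nabla^0d^0F|^2=\sum_{i,j=1}^{m+1}|\partial^2F/\partial x^i\partial x^j|^2$. *)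

theory Defs
  imports "HOL-Analysis.Analysis"
begin

definition pd :: "'m::finite \<Rightarrow> (real^'m \<Rightarrow> real) \<Rightarrow> real^'m \<Rightarrow> real" where
  "pd i f x = deriv (\<lambda>t. f (x + t *\<^sub>R axis i 1)) 0"

definition lap0 :: "(real^'m::finite \<Rightarrow> real) \<Rightarrow> real^'m \<Rightarrow> real" where
  "lap0 f x = - (\<Sum>i\<in>UNIV. pd i (pd i f) x)"

definition homog_poly :: "nat \<Rightarrow> (real^'m::finite \<Rightarrow> real) \<Rightarrow> bool" where
  "homog_poly k f \<longleftrightarrow> (\<exists>c :: ('m \<Rightarrow> nat) \<Rightarrow> real. \<forall>x.
     f x = (\<Sum>\<alpha>\<in>{\<alpha>. sum \<alpha> UNIV = k}. c \<alpha> * (\<Prod>i\<in>UNIV. (x$i) ^ \<alpha> i)))"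

definition harmonic_form :: "nat \<Rightarrow> (real^'m::finite \<Rightarrow> real^'n::finite) \<Rightarrow> bool" where
  "harmonic_form k F \<longleftrightarrow>
     (\<forall>j. homog_poly k (\<lambda>x. F x $ j) \<and> (\<forall>x. lap0 (\<lambda>y. F y $ j) x = 0))"

definition dF_sq :: "(real^'m::finite \<Rightarrow> real^'n::finite) \<Rightarrow> real^'m \<Rightarrow> real" where
  "dF_sq F x = (\<Sum>i\<in>UNIV. \<Sum>j\<in>UNIV. (pd i (\<lambda>y. F y $ j) x)\<^sup>2)"

definition hessF_sq :: "(real^'m::finite \<Rightarrow> real^'n::finite) \<Rightarrow> real^'m \<Rightarrow> real" where
  "hessF_sq F x = (\<Sum>i\<in>UNIV. \<Sum>l\<in>UNIV. \<Sum>j\<in>UNIV. (pd i (pd l (\<lambda>y. F y $ j)) x)\<^sup>2)"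

end

theory Submission
  imports Defs
begin

inductive pf :: "(real^'m::finite \<Rightarrow> real) \<Rightarrow> bool" where
  pf_const: "pf (\<lambda>x. c)"
| pf_coord: "pf (\<lambda>x. x$i)"
| pf_add: "pf f \<Longrightarrow> pf g \<Longrightarrow> pf (\<lambda>x. f x + g x)"
| pf_mult: "pf f \<Longrightarrow> pf g \<Longrightarrow> pf (\<lambda>x. f x * g x)"

lemma pd_eqI: "((\<lambda>t. f (x + t *\<^sub>R axis i 1)) has_real_derivative D) (at 0) \<Longrightarrow> pd i f x = D"
  by (simp add: pd_def DERIV_imp_deriv)

lemma pd_eqI2: "((\<lambda>t. f (x + t *\<^sub>R axis i 1)) has_real_derivative D) (at 0) \<Longrightarrow>
   ((\<lambda>t. f (x + t *\<^sub>R axis i 1)) has_real_derivative pd i f x) (at 0)"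
  by (simp add: pd_eqI)

lemma coord_line: "(\<lambda>t. (x + t *\<^sub>R axis i 1) $ l) = (\<lambda>t. x$l + t * (if l = i then 1 else 0))"
  by (auto simp: axis_def)

lemma coord_deriv: "((\<lambda>t. (x + t *\<^sub>R axis i (1::real)) $ l) has_real_derivative (if l = i then 1 else 0)) (at 0)"
  unfolding coord_line by (auto intro!: derivative_eq_intros)

lemma pd_deriv: "pf f \<Longrightarrow> ((\<lambda>t. f (x + t *\<^sub>R axis i 1)) has_real_derivative pd i f x) (at 0)"
proof (induction arbitrary: x rule: pf.induct)
  case (pf_const c)
  show ?case by (rule pd_eqI2) (rule DERIV_const)
next
  case (pf_coord l)
  show ?case by (rule pd_eqI2) (rule coord_deriv)
next
  case (pf_add f g)
  show ?case by (rule pd_eqI2) (rule DERIV_add[OF pf_add.IH(1) pf_add.IH(2)])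
next
  case (pf_mult f g)
  show ?case by (rule pd_eqI2) (rule DERIV_mult[OF pf_mult.IH(1) pf_mult.IH(2)])
qed

lemma pd_const[simp]: "pd i (\<lambda>x. c) = (\<lambda>x. 0)"
  by (rule ext, rule pd_eqI, rule DERIV_const)

lemma pd_coord[simp]: "pd i (\<lambda>x. x$l) = (\<lambda>x. if l = i then 1 else 0)"
  by (rule ext, rule pd_eqI[of "\<lambda>x. x$l"], rule coord_deriv)

lemma pd_add[simp]: "pf f \<Longrightarrow> pf g \<Longrightarrow> pd i (\<lambda>x. f x + g x) = (\<lambda>x. pd i f x + pd i g x)"
  by (rule ext, rule pd_eqI[of "\<lambda>x. f x + g x"], rule DERIV_add[OF pd_deriv pd_deriv])

lemma pd_mult[simp]: "pf f \<Longrightarrow> pf g \<Longrightarrow> pd i (\<lambda>x. f x * g x) = (\<lambda>x. pd i f x * g x + f x * pd i g x)"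
proof (rule ext)
  fix x assume "pf f" "pf g"
  have "pd i (\<lambda>x. f x * g x) x = pd i f x * g (x + 0 *\<^sub>R axis i 1) + pd i g x * f (x + 0 *\<^sub>R axis i 1)"
    by (rule pd_eqI[of "\<lambda>x. f x * g x"], rule DERIV_mult[OF pd_deriv[OF \<open>pf f\<close>] pd_deriv[OF \<open>pf g\<close>]])
  then show "pd i (\<lambda>x. f x * g x) x = pd i f x * g x + f x * pd i g x" by simp
qed

lemma pf_pd[simp]: "pf f \<Longrightarrow> pf (pd i f)"
  by (induction rule: pf.induct) (auto intro: pf.intros)

declare pf.intros[simp]

lemma pd_comm: "pf f \<Longrightarrow> pd i (pd l f) = pd l (pd i f)"
  by (induction rule: pf.induct) (auto simp: algebra_simps)

lemma pf_sum[simp]: "(\<And>a. a \<in> A \<Longrightarrow> pf (f a)) \<Longrightarrow> pf (\<lambda>x. \<Sum>a\<in>A. f a x)"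
proof (cases "finite A")
  case True
  assume "\<And>a. a \<in> A \<Longrightarrow> pf (f a)"
  then have "\<forall>a\<in>A. pf (f a)" by blast
  with True show ?thesis by (induction A rule: finite_induct) auto
qed simp

lemma pd_sum[simp]: "(\<And>a. a \<in> A \<Longrightarrow> pf (f a)) \<Longrightarrow> pd i (\<lambda>x. \<Sum>a\<in>A. f a x) = (\<lambda>x. \<Sum>a\<in>A. pd i (f a) x)"
proof (cases "finite A")
  case True
  assume "\<And>a. a \<in> A \<Longrightarrow> pf (f a)"
  then have "\<forall>a\<in>A. pf (f a)" by blast
  with True show ?thesis by (induction A rule: finite_induct) auto
qed simp

lemma pf_prod[simp]: "(\<And>a. a \<in> A \<Longrightarrow> pf (f a)) \<Longrightarrow> pf (\<lambda>x. \<Prod>a\<in>A. f a x)"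
proof (cases "finite A")
  case True
  assume "\<And>a. a \<in> A \<Longrightarrow> pf (f a)"
  then have "\<forall>a\<in>A. pf (f a)" by blast
  with True show ?thesis by (induction A rule: finite_induct) auto
qed simp

lemma pf_pow[simp]: "pf f \<Longrightarrow> pf (\<lambda>x. f x ^ n)"
  by (induction n) auto

lemma pd_pow[simp]: "pf f \<Longrightarrow> pd i (\<lambda>x. f x ^ n) = (\<lambda>x. real n * f x ^ (n - 1) * pd i f x)"
proof (induction n)
  case 0 then show ?case by simp
next
  case (Suc n)
  have "pd i (\<lambda>x. f x ^ Suc n) = pd i (\<lambda>x. f x * f x ^ n)" by simp
  also have "\<dots> = (\<lambda>x. pd i f x * f x ^ n + f x * (real n * f x ^ (n - 1) * pd i f x))"
    using Suc by simp
  also have "\<dots> = (\<lambda>x. real (Suc n) * f x ^ n * pd i f x)"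
    by (rule ext, cases n) (auto simp: algebra_simps)
  finally show ?case by simp
qed

definition lapE :: "(real^'m::finite \<Rightarrow> real) \<Rightarrow> real^'m \<Rightarrow> real" where
  "lapE f x = (\<Sum>l\<in>UNIV. pd l (pd l f) x)"

lemma lapE_add: "pf f \<Longrightarrow> pf g \<Longrightarrow> lapE (\<lambda>x. f x + g x) x = lapE f x + lapE g x"
  by (simp add: lapE_def sum.distrib)

lemma lapE_cmult: "pf f \<Longrightarrow> lapE (\<lambda>x. c * f x) x = c * lapE f x"
  by (simp add: lapE_def sum_distrib_left)

lemma lapE_mult: "pf f \<Longrightarrow> pf g \<Longrightarrow> lapE (\<lambda>x. f x * g x) x =
   lapE f x * g x + 2 * (\<Sum>l\<in>UNIV. pd l f x * pd l g x) + f x * lapE g x"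
  by (simp add: lapE_def sum.distrib sum_distrib_left sum_distrib_right algebra_simps)

lemma lapE_sum: "(\<And>a. a \<in> A \<Longrightarrow> pf (f a)) \<Longrightarrow> lapE (\<lambda>x. \<Sum>a\<in>A. f a x) x = (\<Sum>a\<in>A. lapE (f a) x)"
  by (simp add: lapE_def sum.swap[of _ A])

definition sq :: "real^'m::finite \<Rightarrow> real" where
  "sq x = (\<Sum>i\<in>UNIV. x$i * x$i)"

lemma pf_sq[simp]: "pf sq"
  unfolding sq_def by simp

lemma pd_sq[simp]: "pd l sq = (\<lambda>x. 2 * x$l)"
  unfolding sq_def by (simp add: if_distrib cong: if_cong)

lemma sq_norm: "sq x = (norm x)\<^sup>2"
  by (simp add: sq_def power2_norm_eq_inner inner_vec_def)

lemma powm: "real q * a^(q-1) * a = real q * (a::real)^q"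
  by (cases q) auto

lemma lap_sq_pow:
  fixes x :: "real^'m::finite"
  shows "lapE (\<lambda>x. sq x ^ Suc q) x = 2 * (real q + 1) * (real CARD('m) + 2 * real q) * sq x ^ q"
proof -
  have d1: "pd l (\<lambda>x. sq x ^ Suc q) = (\<lambda>x. real (Suc q) * sq x ^ q * (2 * x$l))" for l :: 'm
    by (simp only: pd_pow[OF pf_sq] pd_sq diff_Suc_1)
  have d2: "pd l (\<lambda>x. real (Suc q) * sq x ^ q * (2 * x$l)) x =
      (real (Suc q) * (real q * sq x ^ (q - 1) * 4)) * (x$l * x$l) + 2 * real (Suc q) * sq x ^ q" for l :: 'm
    by (simp add: algebra_simps)
  have "lapE (\<lambda>x. sq x ^ Suc q) x = (\<Sum>l\<in>UNIV. (real (Suc q) * (real q * sq x ^ (q - 1) * 4)) * (x$l * x$l) + 2 * real (Suc q) * sq x ^ q)"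
    unfolding lapE_def d1 d2 by simp
  also have "\<dots> = (real (Suc q) * (real q * sq x ^ (q - 1) * 4)) * sq x + real CARD('m) * (2 * real (Suc q) * sq x ^ q)"
    by (simp add: sum.distrib sum_distrib_left[symmetric] sq_def)
  also have "\<dots> = 2 * (real q + 1) * (real CARD('m) + 2 * real q) * sq x ^ q"
    by (cases q) (simp_all add: algebra_simps)
  finally show ?thesis .
qed

lemma homog_pf: "homog_poly k f \<Longrightarrow> pf f"
proof -
  assume "homog_poly k f"
  then obtain c :: "('a \<Rightarrow> nat) \<Rightarrow> real" where c: "\<forall>x. f x = (\<Sum>\<alpha>\<in>{\<alpha>. sum \<alpha> UNIV = k}. c \<alpha> * (\<Prod>i\<in>UNIV. (x$i) ^ \<alpha> i))"
    unfolding homog_poly_def by blast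
  then have "f = (\<lambda>x. \<Sum>\<alpha>\<in>{\<alpha>. sum \<alpha> UNIV = k}. c \<alpha> * (\<Prod>i\<in>UNIV. (x$i) ^ \<alpha> i))" by auto
  then show ?thesis by simp
qed

lemma lapE_pd: "pf f \<Longrightarrow> lapE (pd i f) x = pd i (lapE f) x"
proof -
  assume f: "pf f"
  have "lapE (pd i f) x = (\<Sum>l\<in>UNIV. pd i (pd l (pd l f)) x)"
    unfolding lapE_def using pd_comm[OF f] pd_comm[OF pf_pd[OF f]] by metis
  also have "\<dots> = pd i (\<lambda>x. \<Sum>l\<in>UNIV. pd l (pd l f) x) x"
    using f by simp
  also have "(\<lambda>x. \<Sum>l\<in>UNIV. pd l (pd l f) x) = lapE f"
    by (simp add: lapE_def[abs_def])
  finally show ?thesis .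
qed

lemma lapE_const: "lapE (\<lambda>x. c) x = 0"
  by (simp add: lapE_def)

theorem mainTheorem2:
  fixes F :: "real^'m::finite \<Rightarrow> real^'n::finite" and k :: nat and r :: real and m :: real
  assumes m_def: "m = real CARD('m) - 1"
    and m_ge: "m \<ge> 1"
    and k_ge: "k \<ge> 1"
    and r_pos: "r > 0"
    and harm: "harmonic_form k F"
    and sph: "\<And>x. (norm (F x))\<^sup>2 = r\<^sup>2 * (norm x) ^ (2 * k)"
  shows "\<forall>x::real^'m. norm x = 1 \<longrightarrow>
           lap0 (dF_sq F) x = - 2 * r\<^sup>2 * real k * (real k - 1) * (m + 2 * real k - 1) * (m + 2 * real k - 3)
         \<and> hessF_sq F x = r\<^sup>2 * real k * (real k - 1) *
              (m\<^sup>2 - 4 * m + 3 + 4 * real k * (m - 2) + 4 * (real k)\<^sup>2)"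
proof -
  obtain q where kq: "k = Suc q" using k_ge by (cases k) auto
  define N where "N = real CARD('m)"
  have pfF: "pf (\<lambda>y. F y $ j)" for j
    using harm homog_pf unfolding harmonic_form_def by blast
  have harmF: "lapE (\<lambda>y. F y $ j) = (\<lambda>x. 0)" for j
  proof
    fix x show "lapE (\<lambda>y. F y $ j) x = 0"
      using harm unfolding harmonic_form_def lap0_def lapE_def by auto
  qed
  have normF: "(\<lambda>x. \<Sum>j\<in>UNIV. F x $ j * F x $ j) = (\<lambda>x. r\<^sup>2 * sq x ^ k)"
  proof
    fix x
    have "(\<Sum>j\<in>UNIV. F x $ j * F x $ j) = sq (F x)" by (simp add: sq_def)
    also have "\<dots> = r\<^sup>2 * (norm x) ^ (2 * k)" using sph sq_norm by metis
    also have "\<dots> = r\<^sup>2 * sq x ^ k" by (simp add: sq_norm power_mult)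
    finally show "(\<Sum>j\<in>UNIV. F x $ j * F x $ j) = r\<^sup>2 * sq x ^ k" .
  qed
  have dF1: "lapE (\<lambda>x. \<Sum>j\<in>UNIV. F x $ j * F x $ j) x = 2 * dF_sq F x" for x
  proof -
    have "lapE (\<lambda>x. \<Sum>j\<in>UNIV. F x $ j * F x $ j) x = (\<Sum>j\<in>UNIV. lapE (\<lambda>x. F x $ j * F x $ j) x)"
      using pfF by (simp add: lapE_sum)
    also have "\<dots> = (\<Sum>j\<in>UNIV. 2 * (\<Sum>l\<in>UNIV. pd l (\<lambda>y. F y $ j) x * pd l (\<lambda>y. F y $ j) x))"
      using pfF harmF by (simp add: lapE_mult)
    also have "\<dots> = 2 * (\<Sum>j\<in>UNIV. \<Sum>l\<in>UNIV. pd l (\<lambda>y. F y $ j) x * pd l (\<lambda>y. F y $ j) x)"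
      by (simp add: sum_distrib_left)
    also have "(\<Sum>j\<in>UNIV. \<Sum>l\<in>UNIV. pd l (\<lambda>y. F y $ j) x * pd l (\<lambda>y. F y $ j) x)
       = (\<Sum>l\<in>UNIV. \<Sum>j\<in>UNIV. pd l (\<lambda>y. F y $ j) x * pd l (\<lambda>y. F y $ j) x)"
      by (rule sum.swap)
    also have "\<dots> = dF_sq F x"
      unfolding dF_sq_def by (simp add: power2_eq_square)
    finally show ?thesis .
  qed
  define C where "C = r\<^sup>2 * (real q + 1) * (N + 2 * real q)"
  have dFeq: "dF_sq F = (\<lambda>x. C * sq x ^ q)"
  proof
    fix x
    have "2 * dF_sq F x = lapE (\<lambda>x. r\<^sup>2 * sq x ^ k) x" using dF1 normF by metis
    also have "\<dots> = r\<^sup>2 * lapE (\<lambda>x. sq x ^ Suc q) x" unfolding kq by (simp add: lapE_cmult)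
    also have "\<dots> = 2 * (C * sq x ^ q)" unfolding lap_sq_pow C_def N_def by simp
    finally show "dF_sq F x = C * sq x ^ q" by simp
  qed
  have hess1: "lapE (dF_sq F) x = 2 * hessF_sq F x" for x
  proof -
    have pf2: "pf (\<lambda>y. (pd i (\<lambda>y. F y $ j) y)\<^sup>2)" for i j using pfF by simp
    have "dF_sq F = (\<lambda>x. \<Sum>i\<in>UNIV. \<Sum>j\<in>UNIV. pd i (\<lambda>y. F y $ j) x * pd i (\<lambda>y. F y $ j) x)"
      by (simp add: dF_sq_def[abs_def] power2_eq_square)
    then have "lapE (dF_sq F) x = (\<Sum>i\<in>UNIV. \<Sum>j\<in>UNIV. lapE (\<lambda>x. pd i (\<lambda>y. F y $ j) x * pd i (\<lambda>y. F y $ j) x) x)"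
      using pfF by (simp add: lapE_sum)
    also have "\<dots> = (\<Sum>i\<in>UNIV. \<Sum>j\<in>UNIV. 2 * (\<Sum>l\<in>UNIV. pd l (pd i (\<lambda>y. F y $ j)) x * pd l (pd i (\<lambda>y. F y $ j)) x))"
      using pfF harmF by (simp add: lapE_mult lapE_pd)
    also have "\<dots> = (\<Sum>i\<in>UNIV. \<Sum>j\<in>UNIV. 2 * (\<Sum>l\<in>UNIV. pd i (pd l (\<lambda>y. F y $ j)) x * pd i (pd l (\<lambda>y. F y $ j)) x))"
      using pd_comm[OF pfF] by simp
    also have "\<dots> = 2 * (\<Sum>i\<in>UNIV. \<Sum>j\<in>UNIV. \<Sum>l\<in>UNIV. pd i (pd l (\<lambda>y. F y $ j)) x * pd i (pd l (\<lambda>y. F y $ j)) x)"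
      by (simp add: sum_distrib_left)
    also have "(\<Sum>i\<in>UNIV. \<Sum>j\<in>UNIV. \<Sum>l\<in>UNIV. pd i (pd l (\<lambda>y. F y $ j)) x * pd i (pd l (\<lambda>y. F y $ j)) x)
       = (\<Sum>i\<in>UNIV. \<Sum>l\<in>UNIV. \<Sum>j\<in>UNIV. pd i (pd l (\<lambda>y. F y $ j)) x * pd i (pd l (\<lambda>y. F y $ j)) x)"
      by (rule sum.cong[OF refl], rule sum.swap)
    also have "\<dots> = hessF_sq F x"
      unfolding hessF_sq_def by (simp add: power2_eq_square)
    finally show ?thesis .
  qed
  show ?thesis
  proof (intro allI impI)
    fix x :: "real^'m" assume nx: "norm x = 1"
    have sq1: "sq x = 1" using nx by (simp add: sq_norm)
    have L: "lapE (\<lambda>x. sq x ^ q) x = 2 * real q * (N + 2 * real q - 2)"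
    proof (cases q)
      case 0 then show ?thesis by (simp add: lapE_const)
    next
      case (Suc p)
      show ?thesis unfolding Suc lap_sq_pow sq1 N_def by (simp add: algebra_simps)
    qed
    have A: "lap0 (dF_sq F) x = - C * (2 * real q * (N + 2 * real q - 2))"
      unfolding lap0_def dFeq using L lapE_cmult[OF pf_pow[OF pf_sq], of C q x]
      by (simp add: lapE_def)
    have B: "hessF_sq F x = C * (real q * (N + 2 * real q - 2))"
      using hess1[of x] lapE_cmult[OF pf_pow[OF pf_sq], of C q x] L unfolding dFeq by simp
    have Nm: "N = m + 1" using m_def N_def by simp
    show "lap0 (dF_sq F) x = - 2 * r\<^sup>2 * real k * (real k - 1) * (m + 2 * real k - 1) * (m + 2 * real k - 3)
         \<and> hessF_sq F x = r\<^sup>2 * real k * (real k - 1) *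
              (m\<^sup>2 - 4 * m + 3 + 4 * real k * (m - 2) + 4 * (real k)\<^sup>2)"
      unfolding A B C_def Nm kq by (simp add: algebra_simps power2_eq_square)
  qed
qed

end
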